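(* The boxed ramified monoid $\mathcal{BR}(\mathfrak{S}_n)$ is generated by $e_1,\ldots,e_{n-1}$ and $z_1,\ldots,z_{n-1}$.
   Context: $\mathfrak{C}_n$ is the partition monoid: set partitions of $[2n]$ (top points $1,\dots,n$, bottom points $n+1,\dots,2n$) with concatenation product $I*J$ (identify bottom point $n+i$ of $I$ with top point $i$ of $J$, join blocks transitively, delete the middle points). $I\preceq J$ means each block of $J$ is a union of blocks of $I$. $\mathfrak{S}_n\subseteq\mathfrak{C}_n$ consists of the partitions with all blocks of the form $\{i,n+j\}$; $s_i$ is the simple transposition; $1=\{\{i,n+i\}\}$. A set partition $J$ of $[2n]$ is boxed if $1\preceq J$ and the restriction of $J$ to $[n]$ is linear (all blocks intervals). For a submonoid $M\subseteq\mathfrak{C}_n$, $\mathcal{BR}(M)$ is the set of pairs $(I,J)$ with $I\in M$, $J$ boxed and $I\preceq J$, with product $(I,J)(H,K)=(I*H,J*K)$. Let $b_i$ be obtained from $1$ by merging the blocks $\{i,n+i\}$ and $\{i+1,n+i+1\}$; set $e_i=(1,b_i)$ and $z_i=(s_i,b_i)$ for $i\in[n-1]$. *)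

theory Defs
  imports "HOL-Library.Disjoint_Sets"
begin

text \<open>Set partitions of [2n] = {1..2n}: top points 1..n, bottom points n+1..2n.
  A partition is represented as its set of blocks.\<close>

type_synonym spart = "nat set set"

definition cpart :: "nat \<Rightarrow> spart set" where
  "cpart n = {P. partition_on {1..2*n} P}"

definition samebl :: "spart \<Rightarrow> nat \<Rightarrow> nat \<Rightarrow> bool" where
  "samebl P x y \<longleftrightarrow> (\<exists>B\<in>P. x \<in> B \<and> y \<in> B)"

text \<open>Points of I keep their labels (its bottom points n+i become
  the middle points n+i); points of J are shifted: top i of J becomes the middle point n+i,
  bottom n+i of J becomes 2n+i. Blocks are joined transitively, middle points deleted.\<close>

definition concat_rel :: "nat \<Rightarrow> spart \<Rightarrow> spart \<Rightarrow> (nat \<times> nat) set" where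
  "concat_rel n I J =
     {(x, y). samebl I x y} \<union> {(x + n, y + n) | x y. samebl J x y}"

definition outpt :: "nat \<Rightarrow> nat \<Rightarrow> nat" where
  "outpt n x = (if x \<le> n then x else x + n)"

definition concat :: "nat \<Rightarrow> spart \<Rightarrow> spart \<Rightarrow> spart" where
  "concat n I J =
     (\<lambda>x. {y \<in> {1..2*n}. (outpt n x, outpt n y) \<in> (concat_rel n I J)\<^sup>*}) ` {1..2*n}"

definition refines :: "spart \<Rightarrow> spart \<Rightarrow> bool" where
  "refines I J \<longleftrightarrow> (\<forall>B\<in>J. \<exists>S\<subseteq>I. B = \<Union>S)"

definition perm_part :: "nat \<Rightarrow> (nat \<Rightarrow> nat) \<Rightarrow> spart" where
  "perm_part n \<sigma> = {{i, n + \<sigma> i} | i. i \<in> {1..n}}"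

definition one_part :: "nat \<Rightarrow> spart" where
  "one_part n = perm_part n id"

definition sym_part :: "nat \<Rightarrow> spart set" where
  "sym_part n = {P \<in> cpart n. \<forall>B\<in>P. \<exists>i\<in>{1..n}. \<exists>j\<in>{1..n}. B = {i, n + j}}"

definition swp :: "nat \<Rightarrow> nat \<Rightarrow> nat" where
  "swp i j = (if j = i then i + 1 else if j = i + 1 then i else j)"

definition s_part :: "nat \<Rightarrow> nat \<Rightarrow> spart" where
  "s_part n i = perm_part n (swp i)"

definition is_interval :: "nat set \<Rightarrow> bool" where
  "is_interval C \<longleftrightarrow> (\<forall>a b c. a \<in> C \<longrightarrow> c \<in> C \<longrightarrow> a \<le> b \<longrightarrow> b \<le> c \<longrightarrow> b \<in> C)"

definition restr_top :: "nat \<Rightarrow> spart \<Rightarrow> spart" where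
  "restr_top n J = (\<lambda>B. B \<inter> {1..n}) ` J - {{}}"

definition boxed :: "nat \<Rightarrow> spart \<Rightarrow> bool" where
  "boxed n J \<longleftrightarrow> J \<in> cpart n \<and> refines (one_part n) J \<and> (\<forall>C\<in>restr_top n J. is_interval C)"

definition BR :: "nat \<Rightarrow> spart set \<Rightarrow> (spart \<times> spart) set" where
  "BR n M = {(I, J). I \<in> M \<and> boxed n J \<and> refines I J}"

definition br_mult :: "nat \<Rightarrow> spart \<times> spart \<Rightarrow> spart \<times> spart \<Rightarrow> spart \<times> spart" where
  "br_mult n p q = (concat n (fst p) (fst q), concat n (snd p) (snd q))"

definition b_part :: "nat \<Rightarrow> nat \<Rightarrow> spart" where
  "b_part n i = (one_part n - {{i, n + i}, {i + 1, n + i + 1}}) \<union> {{i, i + 1, n + i, n + i + 1}}"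

definition e_gen :: "nat \<Rightarrow> nat \<Rightarrow> spart \<times> spart" where
  "e_gen n i = (one_part n, b_part n i)"

definition z_gen :: "nat \<Rightarrow> nat \<Rightarrow> spart \<times> spart" where
  "z_gen n i = (s_part n i, b_part n i)"

inductive_set br_generated :: "nat \<Rightarrow> (spart \<times> spart) set \<Rightarrow> (spart \<times> spart) set"
  for n G where
  unit: "(one_part n, one_part n) \<in> br_generated n G"
| gen: "g \<in> G \<Longrightarrow> g \<in> br_generated n G"
| mult: "x \<in> br_generated n G \<Longrightarrow> y \<in> br_generated n G \<Longrightarrow> br_mult n x y \<in> br_generated n G"

end

theory Submission
  imports Defs
begin
definition eqv :: "nat set \<Rightarrow> (nat \<Rightarrow> nat \<Rightarrow> bool) \<Rightarrow> bool" where
  "eqv A r \<longleftrightarrow> (\<forall>x\<in>A. r x x) \<and> (\<forall>x\<in>A. \<forall>y\<in>A. r x y \<longrightarrow> r y x)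
     \<and> (\<forall>x\<in>A. \<forall>y\<in>A. \<forall>z\<in>A. r x y \<longrightarrow> r y z \<longrightarrow> r x z)"

lemma eqvD1: "eqv A r \<Longrightarrow> x \<in> A \<Longrightarrow> r x x" unfolding eqv_def by blast
lemma eqvD2: "eqv A r \<Longrightarrow> x \<in> A \<Longrightarrow> y \<in> A \<Longrightarrow> r x y \<Longrightarrow> r y x" unfolding eqv_def by blast
lemma eqvD3: "eqv A r \<Longrightarrow> x \<in> A \<Longrightarrow> y \<in> A \<Longrightarrow> z \<in> A \<Longrightarrow> r x y \<Longrightarrow> r y z \<Longrightarrow> r x z"
  unfolding eqv_def by blast

definition cls :: "nat set \<Rightarrow> (nat \<Rightarrow> nat \<Rightarrow> bool) \<Rightarrow> spart" where
  "cls A r = (\<lambda>x. {y\<in>A. r x y}) ` A"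

lemma eqv_kernel: "eqv A (\<lambda>x y. f x = f y)"
  by (auto simp: eqv_def)

lemma cls_partition:
  assumes e: "eqv A r" shows "partition_on A (cls A r)"
proof (rule partition_onI)
  show "\<Union>(cls A r) = A" using eqvD1[OF e] by (auto simp: cls_def)
  show "{} \<notin> cls A r" using eqvD1[OF e] by (auto simp: cls_def)
  fix p q assume "p \<in> cls A r" "q \<in> cls A r" "p \<noteq> q"
  then obtain x y where x: "x \<in> A" "p = {z\<in>A. r x z}" and y: "y \<in> A" "q = {z\<in>A. r y z}"
    by (auto simp: cls_def)
  show "disjnt p q"
  proof (rule ccontr)
    assume "\<not> disjnt p q"
    then obtain w where w: "w \<in> A" "r x w" "r y w" using x y by (auto simp: disjnt_def)
    have "r x y" using eqvD2[OF e _ _ w(3)] eqvD3[OF e _ _ _ w(2)] w x y by blast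
    have "p \<subseteq> q"
    proof
      fix z assume "z \<in> p"
      then have "z \<in> A" "r x z" using x by auto
      then have "r y z" using eqvD2[OF e x(1) y(1) \<open>r x y\<close>] eqvD3[OF e y(1) x(1)] by blast
      then show "z \<in> q" using y \<open>z \<in> A\<close> by auto
    qed
    moreover have "q \<subseteq> p"
    proof
      fix z assume "z \<in> q"
      then have "z \<in> A" "r y z" using y by auto
      then have "r x z" using eqvD3[OF e x(1) y(1) _ \<open>r x y\<close>] by blast
      then show "z \<in> p" using x \<open>z \<in> A\<close> by auto
    qed
    ultimately show False using \<open>p \<noteq> q\<close> by simp
  qed
qed

lemma cls_samebl:
  assumes e: "eqv A r" shows "samebl (cls A r) x y \<longleftrightarrow> x \<in> A \<and> y \<in> A \<and> r x y"
proof
  assume "samebl (cls A r) x y"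
  then obtain z where z: "z \<in> A" "x \<in> A" "y \<in> A" "r z x" "r z y" by (auto simp: samebl_def cls_def)
  then have "r x z" using eqvD2[OF e] by blast
  then show "x \<in> A \<and> y \<in> A \<and> r x y" using eqvD3[OF e z(2) z(1) z(3)] z by blast
next
  assume a: "x \<in> A \<and> y \<in> A \<and> r x y"
  have S: "{z\<in>A. r x z} \<in> cls A r" using a unfolding cls_def by blast
  show "samebl (cls A r) x y" unfolding samebl_def
  proof (rule bexI[OF _ S])
    show "x \<in> {z\<in>A. r x z} \<and> y \<in> {z\<in>A. r x z}" using a eqvD1[OF e] by auto
  qed
qed

lemma cls_cong: "(\<And>x y. x \<in> A \<Longrightarrow> y \<in> A \<Longrightarrow> r x y = r' x y) \<Longrightarrow> cls A r = cls A r'"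
  unfolding cls_def by (rule image_cong) auto

lemma cls_refines:
  assumes "eqv A r" "eqv A r'" "\<And>x y. x \<in> A \<Longrightarrow> y \<in> A \<Longrightarrow> r x y \<Longrightarrow> r' x y"
  shows "refines (cls A r) (cls A r')"
  unfolding refines_def
proof
  fix B assume "B \<in> cls A r'"
  then obtain x where x: "x \<in> A" "B = {z\<in>A. r' x z}" by (auto simp: cls_def)
  let ?S = "(\<lambda>y. {z\<in>A. r y z}) ` B"
  have "?S \<subseteq> cls A r" using x by (auto simp: cls_def)
  moreover have "B = \<Union>?S"
  proof
    show "B \<subseteq> \<Union>?S"
    proof
      fix z assume "z \<in> B"
      then have "z \<in> A" using x by auto
      then have "z \<in> {w\<in>A. r z w}" using eqvD1[OF assms(1)] by auto
      then show "z \<in> \<Union>?S" using \<open>z \<in> B\<close> by blast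
    qed
    show "\<Union>?S \<subseteq> B"
    proof
      fix z assume "z \<in> \<Union>?S"
      then obtain y where y: "y \<in> B" "z \<in> A" "r y z" by auto
      then have yA: "y \<in> A" "r' x y" using x by auto
      have "r' y z" using assms(3)[OF yA(1) y(2) y(3)] .
      then have "r' x z" using eqvD3[OF assms(2) x(1) yA(1) y(2) yA(2)] by blast
      then show "z \<in> B" using x y by auto
    qed
  qed
  ultimately show "\<exists>S\<subseteq>cls A r. B = \<Union>S" by blast
qed

lemma part_eqv:
  assumes "partition_on A P" shows "eqv A (samebl P)"
proof -
  have d: "disjoint P" and u: "A = \<Union>P" using partition_onD1[OF assms] partition_onD2[OF assms] by auto
  show ?thesis unfolding eqv_def
  proof (intro conjI ballI impI)
    fix x assume "x \<in> A" then show "samebl P x x" using u by (auto simp: samebl_def)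
  next
    fix x y assume "samebl P x y" then show "samebl P y x" by (auto simp: samebl_def)
  next
    fix x y z assume "samebl P x y" "samebl P y z"
    then obtain B1 B2 where "B1 \<in> P" "B2 \<in> P" "x \<in> B1" "y \<in> B1" "y \<in> B2" "z \<in> B2"
      by (auto simp: samebl_def)
    then show "samebl P x z" using disjointD[OF d] unfolding samebl_def by blast
  qed
qed

lemma part_cls:
  assumes "partition_on A P" shows "P = cls A (samebl P)"
proof -
  have d: "disjoint P" and u: "A = \<Union>P" and e: "{} \<notin> P"
    using partition_onD1[OF assms] partition_onD2[OF assms] partition_onD3[OF assms] by auto
  have cl: "{y\<in>A. samebl P x y} = B" if "B \<in> P" "x \<in> B" for B x
    using that disjointD[OF d] u unfolding samebl_def by blast
  show ?thesis
  proof
    show "P \<subseteq> cls A (samebl P)"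
    proof
      fix B assume "B \<in> P"
      then obtain x where "x \<in> B" using e by (metis all_not_in_conv)
      then show "B \<in> cls A (samebl P)" using cl[OF \<open>B \<in> P\<close>] u \<open>B \<in> P\<close> unfolding cls_def by blast
    qed
    show "cls A (samebl P) \<subseteq> P"
    proof
      fix C assume "C \<in> cls A (samebl P)"
      then obtain x where "x \<in> A" "C = {y\<in>A. samebl P x y}" by (auto simp: cls_def)
      then obtain B where "B \<in> P" "x \<in> B" using u by auto
      then show "C \<in> P" using cl \<open>C = _\<close> by auto
    qed
  qed
qed

lemma refines_samebl:
  assumes "partition_on A P" "partition_on A Q" "refines P Q" "samebl P x y"
  shows "samebl Q x y"
proof -
  obtain B where B: "B \<in> P" "x \<in> B" "y \<in> B" using assms(4) by (auto simp: samebl_def)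
  have "x \<in> A" using B partition_onD1[OF assms(1)] by auto
  then obtain C where C: "C \<in> Q" "x \<in> C" using partition_onD1[OF assms(2)] by auto
  then obtain S where S: "S \<subseteq> P" "C = \<Union>S" using assms(3) by (auto simp: refines_def)
  then obtain B' where "B' \<in> S" "x \<in> B'" using C by auto
  then have "B' = B" using disjointD[OF partition_onD2[OF assms(1)]] B S by blast
  then have "y \<in> C" using S B \<open>B' \<in> S\<close> by auto
  then show ?thesis using C by (auto simp: samebl_def)
qed

lemma concat_cls:
  "concat n I J = cls {1..2*n} (\<lambda>x y. (outpt n x, outpt n y) \<in> (concat_rel n I J)\<^sup>*)"
  unfolding concat_def cls_def by simp

lemma rtrancl_sub:
  assumes "R \<subseteq> {(a,b). P a b}" "\<And>a. P a a" "\<And>a b c. P a b \<Longrightarrow> P b c \<Longrightarrow> P a c"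
    and "(a,b) \<in> R\<^sup>*"
  shows "P a b"
  using assms(4) by (induction rule: rtrancl_induct) (use assms(1-3) in blast)+


definition kf :: "nat \<Rightarrow> (nat \<Rightarrow> nat) \<Rightarrow> nat \<Rightarrow> nat" where
  "kf n \<sigma> x = (if x \<le> n then \<sigma> x else x - n)"

definition pos :: "nat \<Rightarrow> nat \<Rightarrow> nat" where
  "pos n x = (if x \<le> n then x else x - n)"

definition conn :: "nat set \<Rightarrow> nat \<Rightarrow> nat \<Rightarrow> bool" where
  "conn L a b \<longleftrightarrow> (\<forall>i. min a b \<le> i \<and> i < max a b \<longrightarrow> i \<in> L)"

definition bx :: "nat \<Rightarrow> nat set \<Rightarrow> spart" where
  "bx n L = cls {1..2*n} (\<lambda>x y. conn L (pos n x) (pos n y))"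

lemma conn_refl: "conn L a a" by (auto simp: conn_def)
lemma conn_sym: "conn L a b \<Longrightarrow> conn L b a" by (simp add: conn_def min.commute max.commute)
lemma conn_trans: assumes "conn L a b" "conn L b c" shows "conn L a c"
  unfolding conn_def
proof (intro allI impI)
  fix i assume "min a c \<le> i \<and> i < max a c"
  then have "(min a b \<le> i \<and> i < max a b) \<or> (min b c \<le> i \<and> i < max b c)" by auto
  then show "i \<in> L" using assms unfolding conn_def by blast
qed
lemma conn_mono: "conn L a b \<Longrightarrow> L \<subseteq> M \<Longrightarrow> conn M a b" by (auto simp: conn_def)
lemma conn_between: assumes "conn L p a" "conn L p c" "a \<le> b" "b \<le> c" shows "conn L p b"
  unfolding conn_def
proof (intro allI impI)
  fix i assume "min p b \<le> i \<and> i < max p b"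
  then have "(min p a \<le> i \<and> i < max p a) \<or> (min p c \<le> i \<and> i < max p c)" using assms(3,4) by auto
  then show "i \<in> L" using assms unfolding conn_def by blast
qed
lemma conn_empty: "conn {} a b \<longleftrightarrow> a = b"
  by (auto simp: conn_def)
lemma conn_step: "conn L a b \<Longrightarrow> b \<in> L \<Longrightarrow> a \<le> b \<Longrightarrow> conn L a (Suc b)"
  by (auto simp: conn_def less_Suc_eq)
lemma conn_adj: assumes "i \<in> L" shows "conn L i (Suc i)"
  unfolding conn_def
proof (intro allI impI)
  fix j assume "min i (Suc i) \<le> j \<and> j < max i (Suc i)"
  then have "j = i" by auto
  then show "j \<in> L" using assms by simp
qed
lemma conn_lt_mem: "conn L a b \<Longrightarrow> a \<le> i \<Longrightarrow> i < b \<Longrightarrow> i \<in> L"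
  by (auto simp: conn_def)
lemma conn_single: "conn {i} a b \<longleftrightarrow> a = b \<or> (a = i \<and> b = Suc i) \<or> (a = Suc i \<and> b = i)"
proof
  assume c: "conn {i} a b"
  show "a = b \<or> (a = i \<and> b = Suc i) \<or> (a = Suc i \<and> b = i)"
  proof (cases "a < b")
    case True
    then have "a = i" using conn_lt_mem[OF c, of a] by auto
    moreover have "b = Suc a"
    proof (rule ccontr)
      assume "b \<noteq> Suc a" then have "Suc a < b" using True by auto
      then show False using conn_lt_mem[OF c, of "Suc a"] \<open>a = i\<close> by auto
    qed
    ultimately show ?thesis by auto
  next
    case False
    show ?thesis
    proof (cases "b < a")
      case True
      then have "b = i" using conn_lt_mem[OF conn_sym[OF c], of b] by auto
      moreover have "a = Suc b"
      proof (rule ccontr)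
        assume "a \<noteq> Suc b" then have "Suc b < a" using True by auto
        then show False using conn_lt_mem[OF conn_sym[OF c], of "Suc b"] \<open>b = i\<close> by auto
      qed
      ultimately show ?thesis by auto
    qed (use False in auto)
  qed
next
  assume "a = b \<or> (a = i \<and> b = Suc i) \<or> (a = Suc i \<and> b = i)"
  then show "conn {i} a b" by (auto simp: conn_def)
qed

lemma eqv_conn: "eqv A (\<lambda>x y. conn L (f x) (f y))"
  unfolding eqv_def using conn_refl conn_sym conn_trans by blast

lemma bx_partition: "partition_on {1..2*n} (bx n L)"
  unfolding bx_def by (rule cls_partition[OF eqv_conn])

lemma bx_samebl: "samebl (bx n L) x y \<longleftrightarrow> x \<in> {1..2*n} \<and> y \<in> {1..2*n} \<and> conn L (pos n x) (pos n y)"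
  unfolding bx_def by (rule cls_samebl[OF eqv_conn])

lemma perm_cls:
  assumes b: "bij_betw \<sigma> {1..n} {1..n}"
  shows "perm_part n \<sigma> = cls {1..2*n} (\<lambda>x y. kf n \<sigma> x = kf n \<sigma> y)"
proof -
  have inj: "inj_on \<sigma> {1..n}" and im: "\<sigma> ` {1..n} = {1..n}" using b by (auto simp: bij_betw_def)
  have cl: "{y\<in>{1..2*n}. \<sigma> i = kf n \<sigma> y} = {i, n + \<sigma> i}" if i: "i \<in> {1..n}" for i
  proof
    have si: "\<sigma> i \<in> {1..n}" using i im by auto
    show "{i, n + \<sigma> i} \<subseteq> {y\<in>{1..2*n}. \<sigma> i = kf n \<sigma> y}" using i si by (auto simp: kf_def)
    show "{y\<in>{1..2*n}. \<sigma> i = kf n \<sigma> y} \<subseteq> {i, n + \<sigma> i}"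
    proof
      fix y assume y: "y \<in> {y\<in>{1..2*n}. \<sigma> i = kf n \<sigma> y}"
      show "y \<in> {i, n + \<sigma> i}"
      proof (cases "y \<le> n")
        case True
        then have "\<sigma> i = \<sigma> y" "y \<in> {1..n}" using y by (auto simp: kf_def)
        then have "y = i" using inj i by (metis inj_onD)
        then show ?thesis by simp
      next
        case False
        then show ?thesis using y by (auto simp: kf_def)
      qed
    qed
  qed
  have ex: "\<exists>i\<in>{1..n}. kf n \<sigma> x = \<sigma> i" if x: "x \<in> {1..2*n}" for x
  proof (cases "x \<le> n")
    case True then show ?thesis using x by (auto simp: kf_def)
  next
    case False
    then have "x - n \<in> {1..n}" using x by auto
    then obtain i where "i \<in> {1..n}" "\<sigma> i = x - n" using im by (metis imageE)
    then show ?thesis using False by (intro bexI[of _ i]) (auto simp: kf_def)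
  qed
  show ?thesis
  proof
    show "perm_part n \<sigma> \<subseteq> cls {1..2*n} (\<lambda>x y. kf n \<sigma> x = kf n \<sigma> y)"
    proof
      fix B assume "B \<in> perm_part n \<sigma>"
      then obtain i where i: "i \<in> {1..n}" "B = {i, n + \<sigma> i}" by (auto simp: perm_part_def)
      have "kf n \<sigma> i = \<sigma> i" using i by (simp add: kf_def)
      then have "B = {y\<in>{1..2*n}. kf n \<sigma> i = kf n \<sigma> y}" using cl[OF i(1)] i by simp
      moreover have "i \<in> {1..2*n}" using i by auto
      ultimately show "B \<in> cls {1..2*n} (\<lambda>x y. kf n \<sigma> x = kf n \<sigma> y)" unfolding cls_def by blast
    qed
    show "cls {1..2*n} (\<lambda>x y. kf n \<sigma> x = kf n \<sigma> y) \<subseteq> perm_part n \<sigma>"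
    proof
      fix B assume "B \<in> cls {1..2*n} (\<lambda>x y. kf n \<sigma> x = kf n \<sigma> y)"
      then obtain x where x: "x \<in> {1..2*n}" "B = {y\<in>{1..2*n}. kf n \<sigma> x = kf n \<sigma> y}"
        by (auto simp: cls_def)
      obtain i where i: "i \<in> {1..n}" "kf n \<sigma> x = \<sigma> i" using ex[OF x(1)] by blast
      have "B = {i, n + \<sigma> i}" using cl[OF i(1)] x(2) i(2) by simp
      then show "B \<in> perm_part n \<sigma>" using i(1) unfolding perm_part_def by blast
    qed
  qed
qed

lemma perm_partition: "bij_betw \<sigma> {1..n} {1..n} \<Longrightarrow> partition_on {1..2*n} (perm_part n \<sigma>)"
  using cls_partition[OF eqv_kernel, of "{1..2*n}" "kf n \<sigma>"] perm_cls[of \<sigma> n] by simp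

lemma perm_samebl: "bij_betw \<sigma> {1..n} {1..n} \<Longrightarrow>
   samebl (perm_part n \<sigma>) x y \<longleftrightarrow> x \<in> {1..2*n} \<and> y \<in> {1..2*n} \<and> kf n \<sigma> x = kf n \<sigma> y"
  using cls_samebl[OF eqv_kernel, of "{1..2*n}" "kf n \<sigma>"] perm_cls[of \<sigma> n] by simp

lemma kf_id: "kf n id = pos n" by (auto simp: kf_def pos_def fun_eq_iff)

lemma one_bx: "one_part n = bx n {}"
  unfolding one_part_def bx_def
  by (subst perm_cls) (auto simp: kf_id conn_empty intro: cls_cong)

lemma concat_perm:
  assumes s: "bij_betw \<sigma> {1..n} {1..n}" and t: "bij_betw \<tau> {1..n} {1..n}"
  shows "concat n (perm_part n \<sigma>) (perm_part n \<tau>) = perm_part n (\<tau> \<circ> \<sigma>)"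
proof -
  let ?A = "{1..2*n}"
  have st: "bij_betw (\<tau> \<circ> \<sigma>) {1..n} {1..n}" using s t by (rule bij_betw_trans)
  have sim: "\<sigma> i \<in> {1..n}" if "i \<in> {1..n}" for i using s that by (auto simp: bij_betw_def)
  have tim: "\<tau> i \<in> {1..n}" if "i \<in> {1..n}" for i using t that by (auto simp: bij_betw_def)
  have sinj: "inj_on \<sigma> {1..n}" and tinj: "inj_on \<tau> {1..n}" using s t by (auto simp: bij_betw_def)
  define R where "R = concat_rel n (perm_part n \<sigma>) (perm_part n \<tau>)"
  have R1: "(x, y) \<in> R" if "x \<in> ?A" "y \<in> ?A" "kf n \<sigma> x = kf n \<sigma> y" for x y
    using that unfolding R_def concat_rel_def perm_samebl[OF s] by auto
  have R2: "(x + n, y + n) \<in> R" if "x \<in> ?A" "y \<in> ?A" "kf n \<tau> x = kf n \<tau> y" for x y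
    using that unfolding R_def concat_rel_def perm_samebl[OF t] by blast
  define h where "h a = (if a \<le> n then \<tau> (\<sigma> a) else if a \<le> 2*n then \<tau> (a - n) else a - 2*n)" for a
  have hA: "h a = \<tau> (kf n \<sigma> a)" if "a \<in> ?A" for a using that by (auto simp: h_def kf_def)
  have hB: "h (a + n) = kf n \<tau> a" if "a \<in> ?A" for a using that by (auto simp: h_def kf_def)
  have Rsub: "R \<subseteq> {(a, b). h a = h b}"
  proof
    fix p assume "p \<in> R"
    then show "p \<in> {(a, b). h a = h b}"
      unfolding R_def concat_rel_def perm_samebl[OF s] perm_samebl[OF t]
      using hA hB by auto
  qed
  have "(outpt n x, outpt n y) \<in> R\<^sup>* \<longleftrightarrow> kf n (\<tau> \<circ> \<sigma>) x = kf n (\<tau> \<circ> \<sigma>) y"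
    if x: "x \<in> ?A" and y: "y \<in> ?A" for x y
  proof
    assume a: "(outpt n x, outpt n y) \<in> R\<^sup>*"
    have "h (outpt n x) = h (outpt n y)" by (rule rtrancl_sub[OF Rsub _ _ a]) auto
    moreover have "h (outpt n z) = kf n (\<tau> \<circ> \<sigma>) z" if "z \<in> ?A" for z
      using that by (auto simp: h_def kf_def outpt_def)
    ultimately show "kf n (\<tau> \<circ> \<sigma>) x = kf n (\<tau> \<circ> \<sigma>) y" using x y by simp
  next
    assume eq: "kf n (\<tau> \<circ> \<sigma>) x = kf n (\<tau> \<circ> \<sigma>) y"
    have path: "(z, n + (n + \<tau> (\<sigma> z))) \<in> R\<^sup>*" if z: "z \<in> {1..n}" for z
    proof -
      have "(z, n + \<sigma> z) \<in> R" using z sim[OF z] by (intro R1) (auto simp: kf_def)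
      moreover have "(\<sigma> z + n, n + \<tau> (\<sigma> z) + n) \<in> R"
        using sim[OF z] tim[OF sim[OF z]] by (intro R2) (auto simp: kf_def)
      ultimately show ?thesis
        by (simp add: add.commute)
    qed
    have symR: "sym R"
      unfolding R_def concat_rel_def sym_def samebl_def by blast
    have symRs: "(a, b) \<in> R\<^sup>* \<Longrightarrow> (b, a) \<in> R\<^sup>*" for a b
      using sym_rtrancl[OF symR] by (auto simp: sym_def)
    show "(outpt n x, outpt n y) \<in> R\<^sup>*"
    proof (cases "x \<le> n")
      case xt: True
      show ?thesis
      proof (cases "y \<le> n")
        case True
        then have "\<tau> (\<sigma> x) = \<tau> (\<sigma> y)" using eq xt by (simp add: kf_def)
        then have "x = y" using x y xt True sinj tinj sim by (metis atLeastAtMost_iff inj_onD)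
        then show ?thesis by simp
      next
        case False
        then have "y = n + \<tau> (\<sigma> x)" using eq xt by (auto simp: kf_def)
        then show ?thesis using path[of x] x xt False by (simp add: outpt_def add.commute add.left_commute)
      qed
    next
      case xb: False
      show ?thesis
      proof (cases "y \<le> n")
        case True
        then have "x = n + \<tau> (\<sigma> y)" using eq xb by (auto simp: kf_def)
        then show ?thesis using symRs[OF path[of y]] y xb True by (simp add: outpt_def add.commute add.left_commute)
      next
        case False
        then have "x = y" using eq xb x y by (auto simp: kf_def)
        then show ?thesis by simp
      qed
    qed
  qed
  then have "cls ?A (\<lambda>x y. (outpt n x, outpt n y) \<in> R\<^sup>*) = perm_part n (\<tau> \<circ> \<sigma>)"
    unfolding perm_cls[OF st] by (intro cls_cong) auto
  then show ?thesis unfolding concat_cls R_def .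
qed

lemma concat_bx:
  "concat n (bx n L) (bx n M) = bx n (L \<union> M)"
proof -
  let ?A = "{1..2*n}"
  define R where "R = concat_rel n (bx n L) (bx n M)"
  have R1: "(x, y) \<in> R" if "x \<in> ?A" "y \<in> ?A" "conn L (pos n x) (pos n y)" for x y
    using that unfolding R_def concat_rel_def bx_samebl by auto
  have R2: "(x + n, y + n) \<in> R" if "x \<in> ?A" "y \<in> ?A" "conn M (pos n x) (pos n y)" for x y
    using that unfolding R_def concat_rel_def bx_samebl by blast
  define p3 where "p3 a = (if a \<le> n then a else if a \<le> 2*n then a - n else a - 2*n)" for a
  have pA: "p3 a = pos n a" if "a \<in> ?A" for a using that by (auto simp: p3_def pos_def)
  have pB: "p3 (a + n) = pos n a" if "a \<in> ?A" for a using that by (auto simp: p3_def pos_def)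
  have Rsub: "R \<subseteq> {(a, b). conn (L \<union> M) (p3 a) (p3 b)}"
  proof
    fix p assume "p \<in> R"
    then show "p \<in> {(a, b). conn (L \<union> M) (p3 a) (p3 b)}"
      unfolding R_def concat_rel_def bx_samebl
      using pA pB conn_mono by auto
  qed
  have symR: "sym R"
    unfolding R_def concat_rel_def sym_def samebl_def by blast
  have symRs: "(a, b) \<in> R\<^sup>* \<Longrightarrow> (b, a) \<in> R\<^sup>*" for a b
    using sym_rtrancl[OF symR] by (auto simp: sym_def)
  have adj: "(i, Suc i) \<in> R\<^sup>*" if "i \<in> L \<union> M" "1 \<le> i" "Suc i \<le> n" for i
  proof (cases "i \<in> L")
    case True
    then have "(i, Suc i) \<in> R" using that by (intro R1) (auto simp: pos_def conn_adj)
    then show ?thesis by auto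
  next
    case False
    then have iM: "i \<in> M" using that by auto
    have "(i, n + i) \<in> R" using that by (intro R1) (auto simp: pos_def conn_refl)
    moreover have "(i + n, Suc i + n) \<in> R" using that iM by (intro R2) (auto simp: pos_def conn_adj)
    moreover have "(n + Suc i, Suc i) \<in> R" using that by (intro R1) (auto simp: pos_def conn_refl)
    ultimately show ?thesis
      by (metis add.commute rtrancl.rtrancl_into_rtrancl r_into_rtrancl)
  qed
  have top: "(a, b) \<in> R\<^sup>*" if "conn (L \<union> M) a b" "a \<le> b" "1 \<le> a" "b \<le> n" for a b
    using that
  proof (induction b)
    case 0 then show ?case by simp
  next
    case (Suc b)
    show ?case
    proof (cases "a = Suc b")
      case True then show ?thesis by simp
    next
      case False
      then have ab: "a \<le> b" using Suc by auto
      have "conn (L \<union> M) a b" using conn_between[OF conn_refl Suc.prems(1), of b] ab by auto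
      then have "(a, b) \<in> R\<^sup>*" using Suc ab by auto
      moreover have "b \<in> L \<union> M" using conn_lt_mem[OF Suc.prems(1), of b] ab by auto
      then have "(b, Suc b) \<in> R\<^sup>*" using adj Suc ab by auto
      ultimately show ?thesis by (rule rtrancl_trans)
    qed
  qed
  have top2: "(a, b) \<in> R\<^sup>*" if "conn (L \<union> M) a b" "a \<in> {1..n}" "b \<in> {1..n}" for a b
  proof (cases "a \<le> b")
    case True then show ?thesis using top that by auto
  next
    case False then show ?thesis using top[of b a] that conn_sym symRs by auto
  qed
  have out: "(pos n x, outpt n x) \<in> R\<^sup>*" "pos n x \<in> {1..n}" if x: "x \<in> ?A" for x
  proof -
    show "pos n x \<in> {1..n}" using x by (auto simp: pos_def)
    show "(pos n x, outpt n x) \<in> R\<^sup>*"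
    proof (cases "x \<le> n")
      case True then show ?thesis by (simp add: pos_def outpt_def)
    next
      case False
      then have "(x - n, x) \<in> R" using x by (intro R1) (auto simp: pos_def conn_refl)
      moreover have "(x - n + n, x + n) \<in> R" using x False by (intro R2) (auto simp: pos_def conn_refl)
      ultimately show ?thesis using False by (auto simp: pos_def outpt_def)
    qed
  qed
  have "(outpt n x, outpt n y) \<in> R\<^sup>* \<longleftrightarrow> conn (L \<union> M) (pos n x) (pos n y)"
    if x: "x \<in> ?A" and y: "y \<in> ?A" for x y
  proof
    assume a: "(outpt n x, outpt n y) \<in> R\<^sup>*"
    have "conn (L \<union> M) (p3 (outpt n x)) (p3 (outpt n y))"
      by (rule rtrancl_sub[OF Rsub _ _ a]) (auto intro: conn_refl conn_trans)
    moreover have "p3 (outpt n z) = pos n z" if "z \<in> ?A" for z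
      using that by (auto simp: p3_def pos_def outpt_def)
    ultimately show "conn (L \<union> M) (pos n x) (pos n y)" using x y by simp
  next
    assume "conn (L \<union> M) (pos n x) (pos n y)"
    then have "(pos n x, pos n y) \<in> R\<^sup>*" using top2 out x y by blast
    then show "(outpt n x, outpt n y) \<in> R\<^sup>*"
      using symRs[OF out(1)[OF x]] out(1)[OF y] by (meson rtrancl_trans)
  qed
  then have "cls ?A (\<lambda>x y. (outpt n x, outpt n y) \<in> R\<^sup>*) = bx n (L \<union> M)"
    unfolding bx_def by (intro cls_cong) auto
  then show ?thesis unfolding concat_cls R_def .
qed

lemma cpart_partition: "P \<in> cpart n \<Longrightarrow> partition_on {1..2*n} P"
  by (simp add: cpart_def)

lemma samebl_sym: "samebl P x y \<Longrightarrow> samebl P y x"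
  unfolding samebl_def by blast

lemma samebl_trans: assumes "partition_on A P" "samebl P x y" "samebl P y z" shows "samebl P x z"
proof -
  obtain B1 B2 where "B1 \<in> P" "B2 \<in> P" "x \<in> B1" "y \<in> B1" "y \<in> B2" "z \<in> B2"
    using assms(2,3) unfolding samebl_def by blast
  moreover then have "B1 = B2" using disjointD[OF partition_onD2[OF assms(1)]] by blast
  ultimately show ?thesis unfolding samebl_def by blast
qed

lemma sym_char:
  assumes P: "P \<in> sym_part n"
  shows "\<exists>\<sigma>. bij_betw \<sigma> {1..n} {1..n} \<and> P = perm_part n \<sigma>"
proof -
  let ?A = "{1..2*n}"
  have pp: "partition_on ?A P" using P by (simp add: sym_part_def cpart_def)
  have blk: "\<exists>i\<in>{1..n}. \<exists>j\<in>{1..n}. B = {i, n + j}" if "B \<in> P" for B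
    using P that by (simp add: sym_part_def)
  have e: "eqv ?A (samebl P)" by (rule part_eqv[OF pp])
  have sA: "x \<in> ?A \<and> y \<in> ?A" if "samebl P x y" for x y
    using that partition_onD1[OF pp] unfolding samebl_def by blast
  have F1: "\<exists>j\<in>{1..n}. samebl P i (n + j)" if i: "i \<in> {1..n}" for i
  proof -
    have "i \<in> \<Union>P" using partition_onD1[OF pp] i by auto
    then obtain B where B: "B \<in> P" "i \<in> B" by auto
    then obtain a b where ab: "a \<in> {1..n}" "b \<in> {1..n}" "B = {a, n + b}" using blk by blast
    then have "i = a" using B i by auto
    then show ?thesis using ab B unfolding samebl_def by blast
  qed
  have F3: "j = j'" if h: "samebl P (n + j) (n + j')" "j \<ge> 1" "j' \<ge> 1" for j j'
  proof -
    obtain B where B: "B \<in> P" "n + j \<in> B" "n + j' \<in> B" using h unfolding samebl_def by blast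
    then obtain a b where ab: "a \<in> {1..n}" "b \<in> {1..n}" "B = {a, n + b}" using blk by blast
    then show ?thesis using B h by auto
  qed
  have F4: "i = i'" if h: "samebl P i i'" "i \<le> n" "i' \<le> n" for i i'
  proof -
    obtain B where B: "B \<in> P" "i \<in> B" "i' \<in> B" using h unfolding samebl_def by blast
    then obtain a b where ab: "a \<in> {1..n}" "b \<in> {1..n}" "B = {a, n + b}" using blk by blast
    then show ?thesis using B h by auto
  qed
  define \<sigma> where "\<sigma> i = (SOME j. j \<in> {1..n} \<and> samebl P i (n + j))" for i
  have sig: "\<sigma> i \<in> {1..n} \<and> samebl P i (n + \<sigma> i)" if ii: "i \<in> {1..n}" for i
  proof -
    obtain j where "j \<in> {1..n} \<and> samebl P i (n + j)" using F1[OF ii] by blast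
    then show ?thesis unfolding \<sigma>_def by (rule someI)
  qed
  have inj: "inj_on \<sigma> {1..n}"
  proof (rule inj_onI)
    fix i i' assume i: "i \<in> {1..n}" "i' \<in> {1..n}" "\<sigma> i = \<sigma> i'"
    have a1: "samebl P i (n + \<sigma> i)" using sig[OF i(1)] by blast
    have a2: "samebl P i' (n + \<sigma> i)" using sig[OF i(2)] unfolding i(3) by blast
    have "samebl P i i'" using samebl_trans[OF pp a1 samebl_sym[OF a2]] .
    then show "i = i'" using F4 i by auto
  qed
  have "\<sigma> ` {1..n} \<subseteq> {1..n}" using sig by blast
  then have im: "\<sigma> ` {1..n} = {1..n}" using endo_inj_surj[OF _ _ inj] by blast
  have b: "bij_betw \<sigma> {1..n} {1..n}" using inj im by (simp add: bij_betw_def)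
  have "samebl P x y \<longleftrightarrow> kf n \<sigma> x = kf n \<sigma> y" if x: "x \<in> ?A" and y: "y \<in> ?A" for x y
  proof (cases "x \<le> n")
    case xt: True
    then have xs: "samebl P x (n + \<sigma> x)" "\<sigma> x \<in> {1..n}" using sig x by auto
    show ?thesis
    proof (cases "y \<le> n")
      case True
      show ?thesis
      proof
        assume "samebl P x y" then have "x = y" using F4 xt True by auto
        then show "kf n \<sigma> x = kf n \<sigma> y" by simp
      next
        assume "kf n \<sigma> x = kf n \<sigma> y"
        then have "\<sigma> x = \<sigma> y" using xt True by (simp add: kf_def)
        then have "x = y" using inj x y xt True by (auto dest: inj_onD)
        then show "samebl P x y" using eqvD1[OF e] x by simp
      qed
    next
      case False
      have "y = n + (y - n)" "y - n \<in> {1..n}" using y False by auto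
      then obtain j where j: "y = n + j" "j \<in> {1..n}" by blast
      show ?thesis
      proof
        assume "samebl P x y"
        then have "samebl P (n + \<sigma> x) (n + j)" using xs j samebl_trans[OF pp] samebl_sym by blast
        then have "\<sigma> x = j" using F3 xs j by auto
        then show "kf n \<sigma> x = kf n \<sigma> y" using xt j by (simp add: kf_def)
      next
        assume "kf n \<sigma> x = kf n \<sigma> y"
        then have "\<sigma> x = j" using xt j by (simp add: kf_def)
        then show "samebl P x y" using xs j by simp
      qed
    qed
  next
    case xb: False
    have "x = n + (x - n)" "x - n \<in> {1..n}" using x xb by auto
    then obtain j where j: "x = n + j" "j \<in> {1..n}" by blast
    show ?thesis
    proof (cases "y \<le> n")
      case yt: True
      then have ys: "samebl P y (n + \<sigma> y)" "\<sigma> y \<in> {1..n}" using sig y by auto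
      show ?thesis
      proof
        assume "samebl P x y"
        then have "samebl P (n + \<sigma> y) (n + j)" using ys j samebl_trans[OF pp] samebl_sym by blast
        then have "\<sigma> y = j" using F3 ys j by auto
        then show "kf n \<sigma> x = kf n \<sigma> y" using yt j by (simp add: kf_def)
      next
        assume "kf n \<sigma> x = kf n \<sigma> y"
        then have "\<sigma> y = j" using yt j by (simp add: kf_def)
        then show "samebl P x y" using ys j samebl_sym by simp
      qed
    next
      case False
      show ?thesis
      proof
        assume "samebl P x y"
        then show "kf n \<sigma> x = kf n \<sigma> y" using F3[of j "y - n"] j False by (simp add: kf_def)
      next
        assume "kf n \<sigma> x = kf n \<sigma> y"
        then have "x = y" using xb False by (simp add: kf_def)
        then show "samebl P x y" using eqvD1[OF e] x by simp
      qed
    qed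
  qed
  then have "P = perm_part n \<sigma>"
    unfolding perm_cls[OF b] by (subst part_cls[OF pp]) (intro cls_cong, auto)
  then show ?thesis using b by blast
qed

lemma perm_sym:
  assumes b: "bij_betw \<sigma> {1..n} {1..n}" shows "perm_part n \<sigma> \<in> sym_part n"
proof -
  have "perm_part n \<sigma> \<in> cpart n" using perm_partition[OF b] by (simp add: cpart_def)
  moreover have "\<forall>B\<in>perm_part n \<sigma>. \<exists>i\<in>{1..n}. \<exists>j\<in>{1..n}. B = {i, n + j}"
  proof
    fix B assume "B \<in> perm_part n \<sigma>"
    then obtain i where i: "i \<in> {1..n}" "B = {i, n + \<sigma> i}" by (auto simp: perm_part_def)
    have "\<sigma> i \<in> {1..n}" using b i by (auto simp: bij_betw_def)
    then show "\<exists>i\<in>{1..n}. \<exists>j\<in>{1..n}. B = {i, n + j}" using i by blast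
  qed
  ultimately show ?thesis by (simp add: sym_part_def)
qed

lemma id_bij: "bij_betw id {1..n} {1..n}" by simp

lemma one_partition: "partition_on {1..2*n} (one_part n)"
  unfolding one_part_def by (rule perm_partition[OF id_bij])

lemma bx_boxed: "boxed n (bx n L)"
proof -
  have "bx n L \<in> cpart n" using bx_partition by (simp add: cpart_def)
  moreover have "refines (one_part n) (bx n L)"
    unfolding one_bx bx_def by (rule cls_refines[OF eqv_conn eqv_conn]) (auto simp: conn_empty conn_refl)
  moreover have "\<forall>C\<in>restr_top n (bx n L). is_interval C"
  proof
    fix C assume "C \<in> restr_top n (bx n L)"
    then obtain B where B: "B \<in> bx n L" "C = B \<inter> {1..n}" by (auto simp: restr_top_def)
    then obtain x where x0: "x \<in> {1..2*n}" "B = {y\<in>{1..2*n}. conn L (pos n x) (pos n y)}"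
      by (auto simp: bx_def cls_def)
    then have x: "x \<in> {1..2*n}" "C = {y\<in>{1..2*n}. conn L (pos n x) (pos n y)} \<inter> {1..n}"
      using B by auto
    show "is_interval C" unfolding is_interval_def
    proof (intro allI impI)
      fix a b c assume h: "a \<in> C" "c \<in> C" "a \<le> b" "b \<le> c"
      then have "conn L (pos n x) a" "conn L (pos n x) c" "a \<in> {1..n}" "c \<in> {1..n}"
        using x by (auto simp: pos_def)
      then have "conn L (pos n x) b" "b \<in> {1..n}" using conn_between[of L "pos n x" a c b] h by auto
      then show "b \<in> C" using x by (auto simp: pos_def)
    qed
  qed
  ultimately show ?thesis by (simp add: boxed_def)
qed

lemma boxed_char:
  assumes J: "boxed n J"
  shows "\<exists>L\<subseteq>{1..n-1}. J = bx n L"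
proof -
  let ?A = "{1..2*n}"
  define L where "L = {i\<in>{1..n-1}. samebl J i (Suc i)}"
  have pp: "partition_on ?A J" using J by (simp add: boxed_def cpart_def)
  have ref: "refines (one_part n) J" using J by (simp add: boxed_def)
  have itv: "\<forall>C\<in>restr_top n J. is_interval C" using J by (simp add: boxed_def)
  have sA: "x \<in> ?A \<and> y \<in> ?A" if "samebl J x y" for x y
    using that partition_onD1[OF pp] unfolding samebl_def by blast
  have vert: "samebl J x (n + x)" if "x \<in> {1..n}" for x
  proof -
    have "samebl (one_part n) x (n + x)"
      unfolding one_part_def perm_samebl[OF id_bij] using that by (auto simp: kf_def)
    then show ?thesis using refines_samebl[OF one_partition pp ref] by blast
  qed
  have pos_s: "samebl J x (pos n x)" if "x \<in> ?A" for x
  proof (cases "x \<le> n")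
    case True then show ?thesis using eqvD1[OF part_eqv[OF pp] that] by (simp add: pos_def)
  next
    case False
    then have "x - n \<in> {1..n}" "x = n + (x - n)" using that by auto
    then show ?thesis using vert[of "x - n"] samebl_sym False by (auto simp: pos_def)
  qed
  have between: "samebl J a b" if h: "samebl J a c" "a \<le> b" "b \<le> c" "a \<in> {1..n}" "c \<in> {1..n}" for a b c
  proof -
    obtain B where B: "B \<in> J" "a \<in> B" "c \<in> B" using h unfolding samebl_def by blast
    have "B \<inter> {1..n} \<in> restr_top n J" using B h unfolding restr_top_def by auto
    then have "is_interval (B \<inter> {1..n})" using itv by blast
    then have "b \<in> B \<inter> {1..n}" using h B unfolding is_interval_def by (meson IntI)
    then show ?thesis using B unfolding samebl_def by blast
  qed
  have top1: "samebl J a b \<longleftrightarrow> conn L a b" if "a \<in> {1..n}" "b \<in> {1..n}" "a \<le> b" for a b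
  proof
    assume s: "samebl J a b"
    show "conn L a b" unfolding conn_def
    proof (intro allI impI)
      fix i assume i: "min a b \<le> i \<and> i < max a b"
      then have "samebl J a i" "samebl J a (Suc i)" using between[OF s] that by auto
      then have "samebl J i (Suc i)" using samebl_trans[OF pp] samebl_sym by blast
      then show "i \<in> L" using i that by (auto simp: L_def)
    qed
  next
    assume c: "conn L a b"
    show "samebl J a b"
      using that c
    proof (induction b)
      case 0 then show ?case by simp
    next
      case (Suc b)
      show ?case
      proof (cases "a = Suc b")
        case True
        then have "a \<in> ?A" using Suc.prems by auto
        then show ?thesis using eqvD1[OF part_eqv[OF pp]] True by blast
      next
        case False
        then have ab: "a \<le> b" using Suc by auto
        have "conn L a b" using conn_between[OF conn_refl Suc.prems(4), of b] ab by auto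
        then have "samebl J a b" using Suc ab by auto
        moreover have "b \<in> L" using conn_lt_mem[OF Suc.prems(4), of b] ab by auto
        then have "samebl J b (Suc b)" by (simp add: L_def)
        ultimately show ?thesis using samebl_trans[OF pp] by blast
      qed
    qed
  qed
  have top: "samebl J a b \<longleftrightarrow> conn L a b" if "a \<in> {1..n}" "b \<in> {1..n}" for a b
  proof (cases "a \<le> b")
    case True then show ?thesis using top1 that by auto
  next
    case False then show ?thesis using top1[of b a] that conn_sym samebl_sym by (meson nat_le_linear)
  qed
  have "samebl J x y \<longleftrightarrow> conn L (pos n x) (pos n y)" if x: "x \<in> ?A" and y: "y \<in> ?A" for x y
  proof -
    have px: "pos n x \<in> {1..n}" "pos n y \<in> {1..n}" using x y by (auto simp: pos_def)
    have "samebl J x y \<longleftrightarrow> samebl J (pos n x) (pos n y)"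
      using pos_s[OF x] pos_s[OF y] samebl_trans[OF pp] samebl_sym by meson
    then show ?thesis using top[OF px] by simp
  qed
  then have "J = bx n L"
    unfolding bx_def by (subst part_cls[OF pp]) (intro cls_cong, auto)
  moreover have "L \<subseteq> {1..n-1}" by (auto simp: L_def)
  ultimately show ?thesis by blast
qed

lemma refine_conn:
  assumes b: "bij_betw \<sigma> {1..n} {1..n}" and r: "refines (perm_part n \<sigma>) (bx n L)" and i: "i \<in> {1..n}"
  shows "conn L i (\<sigma> i)"
proof -
  have si: "\<sigma> i \<in> {1..n}" using b i by (auto simp: bij_betw_def)
  have "samebl (perm_part n \<sigma>) i (n + \<sigma> i)"
    unfolding perm_samebl[OF b] using i si by (auto simp: kf_def)
  then have "samebl (bx n L) i (n + \<sigma> i)"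
    using refines_samebl[OF perm_partition[OF b] bx_partition r] by blast
  then show ?thesis using i si by (auto simp: bx_samebl pos_def)
qed

lemma conn_refine:
  assumes b: "bij_betw \<sigma> {1..n} {1..n}" and c: "\<forall>i\<in>{1..n}. conn L i (\<sigma> i)"
  shows "refines (perm_part n \<sigma>) (bx n L)"
  unfolding perm_cls[OF b] bx_def
proof (rule cls_refines[OF eqv_kernel eqv_conn])
  fix x y assume x: "x \<in> {1..2*n}" and y: "y \<in> {1..2*n}" and k: "kf n \<sigma> x = kf n \<sigma> y"
  have inj: "inj_on \<sigma> {1..n}" using b by (auto simp: bij_betw_def)
  show "conn L (pos n x) (pos n y)"
  proof (cases "x \<le> n")
    case xt: True
    show ?thesis
    proof (cases "y \<le> n")
      case True
      then have "x = y" using k xt x y inj by (auto simp: kf_def dest: inj_onD)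
      then show ?thesis by (simp add: conn_refl)
    next
      case False
      then have "pos n y = \<sigma> x" using k xt by (simp add: kf_def pos_def)
      then show ?thesis using c x xt by (simp add: pos_def)
    qed
  next
    case xb: False
    show ?thesis
    proof (cases "y \<le> n")
      case True
      then have "pos n x = \<sigma> y" using k xb by (simp add: kf_def pos_def)
      then show ?thesis using c y True conn_sym by (simp add: pos_def)
    next
      case False
      then have "pos n x = pos n y" using k xb by (simp add: kf_def pos_def)
      then show ?thesis by (simp add: conn_refl)
    qed
  qed
qed

lemma swp_swp: "swp j (swp j x) = x" by (simp add: swp_def)

lemma swp_bij: assumes "1 \<le> j" "j < n" shows "bij_betw (swp j) {1..n} {1..n}"
  by (rule bij_betw_byWitness[where f'="swp j"]) (use assms in \<open>auto simp: swp_def\<close>)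

lemma conn_swp: "j \<in> L \<Longrightarrow> conn L k (swp j k)"
  by (auto simp: swp_def conn_refl conn_adj conn_sym)

lemma b_bx:
  assumes i1: "1 \<le> i" and i2: "i < n"
  shows "b_part n i = bx n {i}"
proof -
  let ?A = "{1..2*n}"
  let ?T = "{{j, n + j} | j. j \<in> {1..n} \<and> j \<noteq> i \<and> j \<noteq> Suc i}"
  let ?Bi = "{i, Suc i, n + i, n + Suc i}"
  have fib: "{y\<in>?A. pos n y = p} = {p, n + p}" if p: "p \<in> {1..n}" for p
  proof (intro set_eqI iffI)
    fix y assume "y \<in> {y\<in>?A. pos n y = p}"
    then show "y \<in> {p, n + p}" by (cases "y \<le> n") (auto simp: pos_def)
  next
    fix y assume "y \<in> {p, n + p}"
    then show "y \<in> {y\<in>?A. pos n y = p}" using p by (auto simp: pos_def)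
  qed
  have cl1: "{y\<in>?A. conn {i} p (pos n y)} = {p, n + p}" if h: "p \<in> {1..n}" "p \<noteq> i" "p \<noteq> Suc i" for p
  proof -
    have e: "conn {i} p q \<longleftrightarrow> q = p" for q using h by (auto simp: conn_single)
    have "{y\<in>?A. conn {i} p (pos n y)} = {y\<in>?A. pos n y = p}" unfolding e by simp
    then show ?thesis using fib[OF h(1)] by simp
  qed
  have cl2: "{y\<in>?A. conn {i} p (pos n y)} = ?Bi" if h: "p = i \<or> p = Suc i" for p
  proof -
    have e: "conn {i} p q \<longleftrightarrow> q = i \<or> q = Suc i" for q using h by (auto simp: conn_single)
    have "{y\<in>?A. conn {i} p (pos n y)} = {y\<in>?A. pos n y = i} \<union> {y\<in>?A. pos n y = Suc i}"
      unfolding e by blast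
    also have "\<dots> = ?Bi" using fib[of i] fib[of "Suc i"] i1 i2 by auto
    finally show ?thesis .
  qed
  have "bx n {i} = ?T \<union> {?Bi}"
  proof
    show "bx n {i} \<subseteq> ?T \<union> {?Bi}"
    proof
      fix C assume "C \<in> bx n {i}"
      then obtain x where x: "x \<in> ?A" "C = {y\<in>?A. conn {i} (pos n x) (pos n y)}"
        by (auto simp: bx_def cls_def)
      have px: "pos n x \<in> {1..n}" using x by (auto simp: pos_def)
      show "C \<in> ?T \<union> {?Bi}"
      proof (cases "pos n x = i \<or> pos n x = Suc i")
        case True then show ?thesis using cl2 x by auto
      next
        case False then show ?thesis using cl1[OF px] x px by auto
      qed
    qed
    show "?T \<union> {?Bi} \<subseteq> bx n {i}"
    proof
      fix C assume "C \<in> ?T \<union> {?Bi}"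
      then show "C \<in> bx n {i}"
      proof
        assume "C \<in> ?T"
        then obtain j where j: "j \<in> {1..n}" "j \<noteq> i" "j \<noteq> Suc i" "C = {j, n + j}" by blast
        have "C = {y\<in>?A. conn {i} (pos n j) (pos n y)}" using cl1[OF j(1-3)] j by (simp add: pos_def)
        moreover have "j \<in> ?A" using j by auto
        ultimately show ?thesis unfolding bx_def cls_def by blast
      next
        assume "C \<in> {?Bi}"
        then have "C = {y\<in>?A. conn {i} (pos n i) (pos n y)}" using cl2[of i] i2 by (simp add: pos_def)
        moreover have "i \<in> ?A" using i1 i2 by auto
        ultimately show ?thesis unfolding bx_def cls_def by blast
      qed
    qed
  qed
  moreover have "b_part n i = ?T \<union> {?Bi}"
  proof -
    have "one_part n - {{i, n + i}, {i + 1, n + i + 1}} = ?T"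
    proof
      show "one_part n - {{i, n + i}, {i + 1, n + i + 1}} \<subseteq> ?T"
      proof
        fix C assume C: "C \<in> one_part n - {{i, n + i}, {i + 1, n + i + 1}}"
        then obtain j where j: "j \<in> {1..n}" "C = {j, n + j}" by (auto simp: one_part_def perm_part_def)
        have "j \<noteq> i" using C j by auto
        moreover have "j \<noteq> Suc i" using C j by auto
        ultimately show "C \<in> ?T" using j by blast
      qed
      show "?T \<subseteq> one_part n - {{i, n + i}, {i + 1, n + i + 1}}"
      proof
        fix C assume "C \<in> ?T"
        then obtain j where j: "j \<in> {1..n}" "j \<noteq> i" "j \<noteq> Suc i" "C = {j, n + j}" by blast
        have "C \<in> one_part n" using j by (auto simp: one_part_def perm_part_def)
        moreover have "C \<noteq> {i, n + i}" using j i1 by (auto simp: doubleton_eq_iff)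
        moreover have "C \<noteq> {i + 1, n + i + 1}" using j i1 by (auto simp: doubleton_eq_iff)
        ultimately show "C \<in> one_part n - {{i, n + i}, {i + 1, n + i + 1}}" by blast
      qed
    qed
    moreover have "{i, i + 1, n + i, n + i + 1} = ?Bi" by auto
    ultimately show ?thesis unfolding b_part_def by simp
  qed
  ultimately show ?thesis by simp
qed

lemma gen_sub:
  assumes "x \<in> br_generated n ({e_gen n i | i. i \<in> {1..n-1}} \<union> {z_gen n i | i. i \<in> {1..n-1}})"
  shows "\<exists>\<sigma> L. x = (perm_part n \<sigma>, bx n L) \<and> bij_betw \<sigma> {1..n} {1..n} \<and> L \<subseteq> {1..n-1}
              \<and> (\<forall>i\<in>{1..n}. conn L i (\<sigma> i))"
  using assms
proof (induction rule: br_generated.induct)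
  case unit
  have "(one_part n, one_part n) = (perm_part n id, bx n {})" by (simp add: one_part_def[symmetric] one_bx)
  moreover have "\<forall>i\<in>{1..n}. conn {} i (id i)" by (simp add: conn_refl)
  moreover have "{} \<subseteq> {1..n-1}" by simp
  ultimately show ?case using id_bij by blast
next
  case (gen g)
  then obtain i where i: "i \<in> {1..n-1}" "g = e_gen n i \<or> g = z_gen n i" by blast
  then have i1: "1 \<le> i" "i < n" by auto
  show ?case
  proof (cases "g = e_gen n i")
    case True
    then have "g = (perm_part n id, bx n {i})" by (simp add: e_gen_def one_part_def b_bx[OF i1])
    moreover have "\<forall>j\<in>{1..n}. conn {i} j (id j)" by (simp add: conn_refl)
    moreover have "{i} \<subseteq> {1..n-1}" using i(1) by simp
    ultimately show ?thesis using id_bij by blast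
  next
    case False
    then have "g = (perm_part n (swp i), bx n {i})" using i by (simp add: z_gen_def s_part_def b_bx[OF i1])
    moreover have "\<forall>j\<in>{1..n}. conn {i} j (swp i j)" using conn_swp[of i "{i}"] by simp
    moreover have "{i} \<subseteq> {1..n-1}" using i(1) by simp
    ultimately show ?thesis using swp_bij[OF i1] by blast
  qed
next
  case (mult x y)
  then obtain \<sigma> L \<tau> M where a: "x = (perm_part n \<sigma>, bx n L)" "bij_betw \<sigma> {1..n} {1..n}" "L \<subseteq> {1..n-1}"
      "\<forall>i\<in>{1..n}. conn L i (\<sigma> i)"
    and b: "y = (perm_part n \<tau>, bx n M)" "bij_betw \<tau> {1..n} {1..n}" "M \<subseteq> {1..n-1}"
      "\<forall>i\<in>{1..n}. conn M i (\<tau> i)" by blast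
  have "br_mult n x y = (perm_part n (\<tau> \<circ> \<sigma>), bx n (L \<union> M))"
    using a b by (simp add: br_mult_def concat_perm concat_bx)
  moreover have "bij_betw (\<tau> \<circ> \<sigma>) {1..n} {1..n}" using a b by (metis bij_betw_trans)
  moreover have "\<forall>i\<in>{1..n}. conn (L \<union> M) i ((\<tau> \<circ> \<sigma>) i)"
  proof
    fix i assume i: "i \<in> {1..n}"
    then have si: "\<sigma> i \<in> {1..n}" using a(2) by (auto simp: bij_betw_def)
    have "conn (L \<union> M) i (\<sigma> i)" using a(4) i conn_mono by blast
    moreover have "conn (L \<union> M) (\<sigma> i) (\<tau> (\<sigma> i))" using b(4) si conn_mono by blast
    ultimately show "conn (L \<union> M) i ((\<tau> \<circ> \<sigma>) i)" using conn_trans by simp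
  qed
  moreover have "L \<union> M \<subseteq> {1..n-1}" using a b by auto
  ultimately show ?case by blast
qed

lemma one_gen:
  assumes "L \<subseteq> {1..n-1}"
  shows "(one_part n, bx n L) \<in> br_generated n ({e_gen n i | i. i \<in> {1..n-1}} \<union> {z_gen n i | i. i \<in> {1..n-1}})"
proof -
  have "finite L" using assms finite_subset by blast
  then show ?thesis using assms
  proof (induction rule: finite_subset_induct)
    case empty
    show ?case by (simp only: one_bx[symmetric]) (rule br_generated.unit)
  next
    case (insert a F)
    then have a1: "1 \<le> a" "a < n" by auto
    have "e_gen n a \<in> br_generated n ({e_gen n i | i. i \<in> {1..n-1}} \<union> {z_gen n i | i. i \<in> {1..n-1}})"
      using insert(2) by (intro br_generated.gen) blast
    then have "br_mult n (one_part n, bx n F) (e_gen n a) \<in> br_generated n ({e_gen n i | i. i \<in> {1..n-1}} \<union> {z_gen n i | i. i \<in> {1..n-1}})"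
      using insert(4) by (rule br_generated.mult[rotated])
    moreover have "br_mult n (one_part n, bx n F) (e_gen n a) = (one_part n, bx n (insert a F))"
      by (simp add: br_mult_def e_gen_def b_bx[OF a1] concat_bx one_part_def concat_perm id_bij)
    ultimately show ?case by simp
  qed
qed

lemma main_gen:
  assumes L: "L \<subseteq> {1..n-1}"
  shows "\<forall>\<sigma>. bij_betw \<sigma> {1..n} {1..n} \<and> (\<forall>i\<in>{1..n}. conn L i (\<sigma> i)) \<and> (\<forall>i\<in>{1..n}. m < i \<longrightarrow> \<sigma> i = i)
     \<longrightarrow> (perm_part n \<sigma>, bx n L) \<in> br_generated n ({e_gen n i | i. i \<in> {1..n-1}} \<union> {z_gen n i | i. i \<in> {1..n-1}})"
proof (induction m)
  case 0
  show ?case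
  proof (intro allI impI)
    fix \<sigma> assume h: "bij_betw \<sigma> {1..n} {1..n} \<and> (\<forall>i\<in>{1..n}. conn L i (\<sigma> i)) \<and> (\<forall>i\<in>{1..n}. 0 < i \<longrightarrow> \<sigma> i = i)"
    have "\<sigma> i = id i" if "i \<in> {1..n}" for i using h that by auto
    then have "perm_part n \<sigma> = perm_part n id" unfolding perm_part_def by (metis (no_types, lifting))
    then show "(perm_part n \<sigma>, bx n L) \<in> br_generated n ({e_gen n i | i. i \<in> {1..n-1}} \<union> {z_gen n i | i. i \<in> {1..n-1}})"
      using one_gen[OF L] by (simp add: one_part_def)
  qed
next
  case (Suc m)
  let ?G = "br_generated n ({e_gen n i | i. i \<in> {1..n-1}} \<union> {z_gen n i | i. i \<in> {1..n-1}})"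
  show ?case
  proof (cases "Suc m \<le> n")
    case False
    show ?thesis
    proof (intro allI impI)
      fix \<sigma> assume h: "bij_betw \<sigma> {1..n} {1..n} \<and> (\<forall>i\<in>{1..n}. conn L i (\<sigma> i)) \<and> (\<forall>i\<in>{1..n}. Suc m < i \<longrightarrow> \<sigma> i = i)"
      have "\<forall>i\<in>{1..n}. m < i \<longrightarrow> \<sigma> i = i" using False by auto
      then show "(perm_part n \<sigma>, bx n L) \<in> ?G" using Suc.IH h by blast
    qed
  next
    case True
    define p where "p = Suc m"
    have pn: "p \<in> {1..n}" using True by (simp add: p_def)
    have inner: "\<forall>\<sigma>. bij_betw \<sigma> {1..n} {1..n} \<and> (\<forall>i\<in>{1..n}. conn L i (\<sigma> i)) \<and> (\<forall>i\<in>{1..n}. p < i \<longrightarrow> \<sigma> i = i)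
         \<and> p - \<sigma> p = d \<longrightarrow> (perm_part n \<sigma>, bx n L) \<in> ?G" for d
    proof (induction d rule: less_induct)
      case (less d)
      show ?case
      proof (intro allI impI)
        fix \<sigma> assume h: "bij_betw \<sigma> {1..n} {1..n} \<and> (\<forall>i\<in>{1..n}. conn L i (\<sigma> i)) \<and> (\<forall>i\<in>{1..n}. p < i \<longrightarrow> \<sigma> i = i)
         \<and> p - \<sigma> p = d"
        have b: "bij_betw \<sigma> {1..n} {1..n}" and c: "\<forall>i\<in>{1..n}. conn L i (\<sigma> i)"
          and f: "\<forall>i\<in>{1..n}. p < i \<longrightarrow> \<sigma> i = i" and d: "p - \<sigma> p = d" using h by auto
        have inj: "inj_on \<sigma> {1..n}" using b by (auto simp: bij_betw_def)
        have sim: "\<sigma> i \<in> {1..n}" if "i \<in> {1..n}" for i using b that by (auto simp: bij_betw_def)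
        have le: "\<sigma> p \<le> p"
        proof (rule ccontr)
          assume "\<not> \<sigma> p \<le> p"
          then have "\<sigma> (\<sigma> p) = \<sigma> p" using f sim[OF pn] by auto
          then have "\<sigma> p = p" using inj sim[OF pn] pn by (auto dest: inj_onD)
          then show False using \<open>\<not> \<sigma> p \<le> p\<close> by simp
        qed
        show "(perm_part n \<sigma>, bx n L) \<in> ?G"
        proof (cases "\<sigma> p = p")
          case True
          have "\<forall>i\<in>{1..n}. m < i \<longrightarrow> \<sigma> i = i"
          proof (intro ballI impI)
            fix i assume "i \<in> {1..n}" "m < i"
            then show "\<sigma> i = i" using f True by (cases "i = p") (auto simp: p_def)
          qed
          then show ?thesis using Suc.IH b c by blast
        next
          case False
          define j where "j = \<sigma> p"
          have j: "j < p" "1 \<le> j" using le False sim[OF pn] by (auto simp: j_def)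
          have j1: "1 \<le> j" "j < n" using j pn by auto
          have jL: "j \<in> L" using conn_lt_mem[OF conn_sym[OF c[rule_format, OF pn]], of j] j by (simp add: j_def)
          define \<tau> where "\<tau> = swp j \<circ> \<sigma>"
          have bt: "bij_betw \<tau> {1..n} {1..n}" unfolding \<tau>_def using b swp_bij[OF j1] by (rule bij_betw_trans)
          have ct: "\<forall>i\<in>{1..n}. conn L i (\<tau> i)"
            using c conn_trans conn_swp[OF jL] by (simp add: \<tau>_def) blast
          have ft: "\<forall>i\<in>{1..n}. p < i \<longrightarrow> \<tau> i = i"
          proof (intro ballI impI)
            fix i assume "i \<in> {1..n}" "p < i"
            then show "\<tau> i = i" using f j by (auto simp: \<tau>_def swp_def)
          qed
          have tp: "\<tau> p = Suc j" by (simp add: \<tau>_def swp_def j_def)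
          have "p - \<tau> p < d" using tp d j by (simp add: j_def)
          then have g1: "(perm_part n \<tau>, bx n L) \<in> ?G" using less.IH bt ct ft by blast
          have g2: "z_gen n j \<in> ?G" using j1 by (intro br_generated.gen) auto
          have "br_mult n (perm_part n \<tau>, bx n L) (z_gen n j) \<in> ?G"
            using g1 g2 by (rule br_generated.mult)
          moreover have "br_mult n (perm_part n \<tau>, bx n L) (z_gen n j) = (perm_part n (swp j \<circ> \<tau>), bx n (L \<union> {j}))"
            by (simp add: br_mult_def z_gen_def s_part_def b_bx[OF j1] concat_bx concat_perm[OF bt swp_bij[OF j1]])
          moreover have "swp j \<circ> \<tau> = \<sigma>" by (rule ext) (simp add: \<tau>_def swp_swp)
          moreover have "L \<union> {j} = L" using jL by auto
          ultimately show ?thesis by simp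
        qed
      qed
    qed
    show ?thesis using inner by (simp add: p_def)
  qed
qed

theorem proposition5p12:
  fixes n :: nat
  shows "BR n (sym_part n) =
         br_generated n ({e_gen n i | i. i \<in> {1..n-1}} \<union> {z_gen n i | i. i \<in> {1..n-1}})"
proof
  show "BR n (sym_part n) \<subseteq> br_generated n ({e_gen n i | i. i \<in> {1..n-1}} \<union> {z_gen n i | i. i \<in> {1..n-1}})"
  proof
    fix x assume "x \<in> BR n (sym_part n)"
    then obtain I J where x: "x = (I, J)" "I \<in> sym_part n" "boxed n J" "refines I J"
      by (auto simp: BR_def)
    obtain \<sigma> where s: "bij_betw \<sigma> {1..n} {1..n}" "I = perm_part n \<sigma>" using sym_char[OF x(2)] by blast
    obtain L where l: "L \<subseteq> {1..n-1}" "J = bx n L" using boxed_char[OF x(3)] by blast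
    have c: "\<forall>i\<in>{1..n}. conn L i (\<sigma> i)" using refine_conn[OF s(1)] x(4) s(2) l(2) by blast
    have "\<forall>i\<in>{1..n}. n < i \<longrightarrow> \<sigma> i = i" by auto
    then show "x \<in> br_generated n ({e_gen n i | i. i \<in> {1..n-1}} \<union> {z_gen n i | i. i \<in> {1..n-1}})"
      using main_gen[OF l(1), of n] s c x(1) l(2) by blast
  qed
  show "br_generated n ({e_gen n i | i. i \<in> {1..n-1}} \<union> {z_gen n i | i. i \<in> {1..n-1}}) \<subseteq> BR n (sym_part n)"
  proof
    fix x assume "x \<in> br_generated n ({e_gen n i | i. i \<in> {1..n-1}} \<union> {z_gen n i | i. i \<in> {1..n-1}})"
    then obtain \<sigma> L where h: "x = (perm_part n \<sigma>, bx n L)" "bij_betw \<sigma> {1..n} {1..n}"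
      "\<forall>i\<in>{1..n}. conn L i (\<sigma> i)" using gen_sub by blast
    show "x \<in> BR n (sym_part n)"
      unfolding BR_def using h perm_sym[OF h(2)] bx_boxed conn_refine[OF h(2) h(3)] by blast
  qed
qed

end
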